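(* A countably infinite disconnected graph $G$ is ME-homogeneous if and only if $G\cong I_\omega[K_\omega]$ or $G\cong I_\omega[K_n]$ for some positive integer $n$.
   Context: All graphs are undirected and loopless; subgraphs are induced. A monomorphism is an injective map sending adjacent vertices to adjacent vertices. $G$ is ME-homogeneous if every monomorphism between finite induced subgraphs of $G$ is the restriction of a surjective endomorphism of $G$. $K_\kappa$ is the complete graph and $I_\kappa$ the edgeless graph on $\kappa$ vertices; the lexicographic product $G[H]$ has vertex set $G\times H$ with $(g,h)\sim(g',h')$ iff $g\sim g'$, or $g=g'$ and $h\sim h'$. Thus $I_\omega[K_m]$ is a disjoint union of countably many copies of $K_m$. *)

theory Defs
  imports Main "HOL-Library.Countable_Set"
begin

definition graph :: "'a set \<Rightarrow> ('a \<Rightarrow> 'a \<Rightarrow> bool) \<Rightarrow> bool" where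
  "graph V E \<longleftrightarrow> (\<forall>x y. E x y \<longrightarrow> x \<in> V \<and> y \<in> V \<and> E y x \<and> x \<noteq> y)"

definition monomorphism :: "('a \<Rightarrow> 'a \<Rightarrow> bool) \<Rightarrow> 'a set \<Rightarrow> 'a set \<Rightarrow> ('a \<Rightarrow> 'a) \<Rightarrow> bool" where
  "monomorphism E A B f \<longleftrightarrow> f ` A \<subseteq> B \<and> inj_on f A \<and>
     (\<forall>x\<in>A. \<forall>y\<in>A. E x y \<longrightarrow> E (f x) (f y))"

definition endomorphism :: "'a set \<Rightarrow> ('a \<Rightarrow> 'a \<Rightarrow> bool) \<Rightarrow> ('a \<Rightarrow> 'a) \<Rightarrow> bool" where
  "endomorphism V E h \<longleftrightarrow> h ` V \<subseteq> V \<and> (\<forall>x\<in>V. \<forall>y\<in>V. E x y \<longrightarrow> E (h x) (h y))"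

definition ME_homogeneous :: "'a set \<Rightarrow> ('a \<Rightarrow> 'a \<Rightarrow> bool) \<Rightarrow> bool" where
  "ME_homogeneous V E \<longleftrightarrow>
     (\<forall>A B f. finite A \<and> A \<subseteq> V \<and> finite B \<and> B \<subseteq> V \<and> monomorphism E A B f \<longrightarrow>
        (\<exists>h. endomorphism V E h \<and> h ` V = V \<and> (\<forall>x\<in>A. h x = f x)))"

definition connected_graph :: "'a set \<Rightarrow> ('a \<Rightarrow> 'a \<Rightarrow> bool) \<Rightarrow> bool" where
  "connected_graph V E \<longleftrightarrow> (\<forall>x\<in>V. \<forall>y\<in>V. E\<^sup>*\<^sup>* x y)"

definition graph_iso :: "'a set \<Rightarrow> ('a \<Rightarrow> 'a \<Rightarrow> bool) \<Rightarrow> 'b set \<Rightarrow> ('b \<Rightarrow> 'b \<Rightarrow> bool) \<Rightarrow> bool" where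
  "graph_iso V E V' E' \<longleftrightarrow>
     (\<exists>f. bij_betw f V V' \<and> (\<forall>x\<in>V. \<forall>y\<in>V. E x y \<longleftrightarrow> E' (f x) (f y)))"

definition complete_E :: "'a set \<Rightarrow> 'a \<Rightarrow> 'a \<Rightarrow> bool" where
  "complete_E V x y \<longleftrightarrow> x \<in> V \<and> y \<in> V \<and> x \<noteq> y"

definition edgeless_E :: "'a \<Rightarrow> 'a \<Rightarrow> bool" where
  "edgeless_E x y \<longleftrightarrow> False"

definition lex_E :: "'a set \<Rightarrow> ('a \<Rightarrow> 'a \<Rightarrow> bool) \<Rightarrow> 'b set \<Rightarrow> ('b \<Rightarrow> 'b \<Rightarrow> bool)
    \<Rightarrow> 'a \<times> 'b \<Rightarrow> 'a \<times> 'b \<Rightarrow> bool" where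
  "lex_E VG EG VH EH p q \<longleftrightarrow>
     p \<in> VG \<times> VH \<and> q \<in> VG \<times> VH \<and>
     (EG (fst p) (fst q) \<or> (fst p = fst q \<and> EH (snd p) (snd q)))"

abbreviation I_omega_K_omega_V :: "(nat \<times> nat) set" where
  "I_omega_K_omega_V \<equiv> (UNIV :: nat set) \<times> (UNIV :: nat set)"
abbreviation I_omega_K_omega_E :: "nat \<times> nat \<Rightarrow> nat \<times> nat \<Rightarrow> bool" where
  "I_omega_K_omega_E \<equiv> lex_E UNIV edgeless_E UNIV (complete_E UNIV)"
abbreviation I_omega_K_V :: "nat \<Rightarrow> (nat \<times> nat) set" where
  "I_omega_K_V n \<equiv> (UNIV :: nat set) \<times> {..<n}"
abbreviation I_omega_K_E :: "nat \<Rightarrow> nat \<times> nat \<Rightarrow> nat \<times> nat \<Rightarrow> bool" where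
  "I_omega_K_E n \<equiv> lex_E UNIV edgeless_E {..<n} (complete_E {..<n})"

end

theory Submission
  imports Defs
begin


lemma bij_ci:
  assumes "countable A" "infinite A" "countable B" "infinite B"
  shows "\<exists>g. bij_betw g A B"
proof -
  have "bij_betw (from_nat_into B \<circ> to_nat_on A) A B"
    using bij_betw_trans[OF to_nat_on_infinite[OF assms(1,2)] bij_betw_from_nat_into[OF assms(3,4)]] .
  thus ?thesis by blast
qed

lemma extend_perm:
  fixes S :: "'b set"
  assumes S: "finite S \<or> countable S"
    and D: "finite D" "D \<subseteq> S" and p: "inj_on p D" "p ` D \<subseteq> S"
  shows "\<exists>\<pi>. bij_betw \<pi> S S \<and> (\<forall>x\<in>D. \<pi> x = p x)"
proof -
  have "\<exists>g. bij_betw g (S - D) (S - p ` D)"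
  proof (cases "finite S")
    case True
    have "card (S - D) = card (S - p ` D)"
      using True D p by (simp add: card_Diff_subset finite_subset card_image)
    thus ?thesis using True finite_same_card_bij by blast
  next
    case False
    hence "countable S" using S by blast
    moreover have "infinite (S - D)" "infinite (S - p ` D)" using False D by auto
    ultimately show ?thesis using bij_ci by (meson countable_Diff)
  qed
  then obtain g where g: "bij_betw g (S - D) (S - p ` D)" by blast
  define \<pi> where "\<pi> x = (if x \<in> D then p x else g x)" for x
  have "bij_betw \<pi> (D \<union> (S - D)) (p ` D \<union> (S - p ` D))"
  proof (rule bij_betw_combine)
    show "bij_betw \<pi> D (p ` D)" using p unfolding bij_betw_def \<pi>_def
      by (auto simp: inj_on_def)
    show "bij_betw \<pi> (S - D) (S - p ` D)" using g
      by (rule bij_betw_cong[THEN iffD1, rotated]) (auto simp: \<pi>_def)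
  qed auto
  moreover have "D \<union> (S - D) = S" "p ` D \<union> (S - p ` D) = S" using D p by auto
  ultimately show ?thesis unfolding \<pi>_def by auto
qed



lemma lexF_iff:
  "lex_E UNIV edgeless_E S (complete_E S) p q \<longleftrightarrow>
     p \<in> UNIV \<times> S \<and> q \<in> UNIV \<times> S \<and> fst p = fst q \<and> snd p \<noteq> snd q"
  unfolding lex_E_def edgeless_E_def complete_E_def by auto

lemma model_ME:
  fixes S :: "nat set"
  assumes S: "finite S \<or> countable S"
  shows "ME_homogeneous ((UNIV::nat set) \<times> S) (lex_E (UNIV::nat set) edgeless_E S (complete_E S))"
  unfolding ME_homogeneous_def
proof (intro allI impI, elim conjE)
  fix A B f
  let ?W = "(UNIV::nat set) \<times> S" and ?F = "lex_E (UNIV::nat set) edgeless_E S (complete_E S)"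
  assume A: "finite A" "A \<subseteq> ?W" and B: "finite B" "B \<subseteq> ?W" and m: "monomorphism ?F A B f"
  have fAB: "f ` A \<subseteq> B" and finj: "inj_on f A" and fE: "\<And>x y. x \<in> A \<Longrightarrow> y \<in> A \<Longrightarrow> ?F x y \<Longrightarrow> ?F (f x) (f y)"
    using m unfolding monomorphism_def by auto
  have key: "fst (f a) = fst (f a')" if "a \<in> A" "a' \<in> A" "fst a = fst a'" for a a'
  proof (cases "a = a'")
    case False
    hence "snd a \<noteq> snd a'" using that(3) by (metis prod.expand)
    hence "?F a a'" using that A by (auto simp: lexF_iff)
    hence "?F (f a) (f a')" using fE that by blast
    thus ?thesis by (simp add: lexF_iff)
  qed simp
  define I where "I = fst ` A"
  define \<sigma> where "\<sigma> i = fst (f (SOME a. a \<in> A \<and> fst a = i))" for i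
  have \<sigma>: "\<sigma> (fst a) = fst (f a)" if "a \<in> A" for a
  proof -
    have "(SOME b. b \<in> A \<and> fst b = fst a) \<in> A \<and> fst (SOME b. b \<in> A \<and> fst b = fst a) = fst a"
      by (rule someI[of _ a]) (use that in auto)
    thus ?thesis unfolding \<sigma>_def using key that by metis
  qed
  have fI: "finite I" using A unfolding I_def by auto
  have c1: "countable (UNIV - I)" "countable (UNIV - \<sigma> ` I)" by (rule countable_Diff, simp)+
  have c2: "infinite (UNIV - I)" "infinite (UNIV - \<sigma> ` I)"
    using fI by (auto simp: Diff_infinite_finite infinite_UNIV_nat)
  have "\<exists>t. bij_betw t (UNIV - I) (UNIV - \<sigma> ` I)"
    by (rule bij_ci[OF c1(1) c2(1) c1(2) c2(2)])
  then obtain t where t: "bij_betw t (UNIV - I) (UNIV - \<sigma> ` I)" by blast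
  define \<tau> where "\<tau> i = (if i \<in> I then \<sigma> i else t i)" for i
  define D where "D i = snd ` {a\<in>A. fst a = i}" for i
  define p where "p i j = snd (f (i, j))" for i j
  have "\<forall>i. \<exists>\<pi>. bij_betw \<pi> S S \<and> (\<forall>x\<in>D i. \<pi> x = p i x)"
  proof
    fix i
    show "\<exists>\<pi>. bij_betw \<pi> S S \<and> (\<forall>x\<in>D i. \<pi> x = p i x)"
    proof (rule extend_perm[OF S])
      show "finite (D i)" using A unfolding D_def by auto
      show "D i \<subseteq> S" using A unfolding D_def by auto
      show "p i ` D i \<subseteq> S" using A B fAB unfolding D_def p_def by force
      show "inj_on (p i) (D i)"
      proof (rule inj_onI)
        fix x y assume xy: "x \<in> D i" "y \<in> D i" "p i x = p i y"
        hence xA: "(i, x) \<in> A" and yA: "(i, y) \<in> A" unfolding D_def by force+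
        have "fst (f (i, x)) = fst (f (i, y))" using key[OF xA yA] by simp
        with xy(3) have "f (i, x) = f (i, y)" unfolding p_def by (simp add: prod_eq_iff)
        hence "(i, x) = (i, y)" using finj xA yA by (simp add: inj_on_eq_iff)
        thus "x = y" by simp
      qed
    qed
  qed
  then obtain \<pi> where \<pi>: "\<And>i. bij_betw (\<pi> i) S S" "\<And>i x. x \<in> D i \<Longrightarrow> \<pi> i x = p i x"
    by metis
  have \<pi>S: "\<pi> i j \<in> S" if "j \<in> S" for i j using \<pi>(1)[of i] that bij_betwE by blast
  define h where "h q = (\<tau> (fst q), \<pi> (fst q) (snd q))" for q
  have "endomorphism ?W ?F h"
    unfolding endomorphism_def
  proof
    show "h ` ?W \<subseteq> ?W" using \<pi>S unfolding h_def by auto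
    show "\<forall>x\<in>?W. \<forall>y\<in>?W. ?F x y \<longrightarrow> ?F (h x) (h y)"
    proof (intro ballI impI)
      fix x y assume "x \<in> ?W" "y \<in> ?W" "?F x y"
      hence "fst x = fst y" "snd x \<noteq> snd y" "snd x \<in> S" "snd y \<in> S" by (auto simp: lexF_iff)
      moreover have "inj_on (\<pi> (fst x)) S" "\<pi> (fst x) ` S = S" using \<pi>(1) unfolding bij_betw_def by auto
      ultimately show "?F (h x) (h y)" unfolding h_def lexF_iff
        by (auto simp: inj_on_eq_iff)
    qed
  qed
  moreover have "h ` ?W = ?W"
  proof
    show "h ` ?W \<subseteq> ?W" using \<pi>S unfolding h_def by auto
    show "?W \<subseteq> h ` ?W"
    proof
      fix q assume q: "q \<in> ?W"
      obtain i where i: "\<tau> i = fst q"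
      proof (cases "fst q \<in> \<sigma> ` I")
        case True
        then obtain i where "i \<in> I" "\<sigma> i = fst q" by auto
        thus ?thesis using that[of i] unfolding \<tau>_def by auto
      next
        case False
        hence "fst q \<in> t ` (UNIV - I)" using t unfolding bij_betw_def by auto
        then obtain i where "i \<in> UNIV - I" "t i = fst q" by auto
        thus ?thesis using that[of i] unfolding \<tau>_def by auto
      qed
      obtain j where "j \<in> S" "\<pi> i j = snd q" using q \<pi>(1)[of i] unfolding bij_betw_def by force
      hence "h (i, j) = q" "(i, j) \<in> ?W" using i unfolding h_def by auto
      thus "q \<in> h ` ?W" by (metis image_eqI)
    qed
  qed
  moreover have "\<forall>x\<in>A. h x = f x"
  proof
    fix a assume a: "a \<in> A"
    have "fst a \<in> I" using a unfolding I_def by auto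
    hence "\<tau> (fst a) = fst (f a)" using \<sigma>[OF a] unfolding \<tau>_def by simp
    moreover have "snd a \<in> D (fst a)" using a unfolding D_def by auto
    hence "\<pi> (fst a) (snd a) = snd (f a)" using \<pi>(2) unfolding p_def by simp
    ultimately show "h a = f a" unfolding h_def by (simp add: prod_eq_iff)
  qed
  ultimately show "\<exists>h. endomorphism ?W ?F h \<and> h ` ?W = ?W \<and> (\<forall>x\<in>A. h x = f x)" by blast
qed



lemma ME_transfer:
  assumes iso: "graph_iso V E W F" and ME: "ME_homogeneous W F"
  shows "ME_homogeneous V E"
proof -
  obtain \<phi> where \<phi>: "bij_betw \<phi> V W" and \<phi>E: "\<And>x y. x \<in> V \<Longrightarrow> y \<in> V \<Longrightarrow> E x y \<longleftrightarrow> F (\<phi> x) (\<phi> y)"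
    using iso unfolding graph_iso_def by blast
  define \<psi> where "\<psi> = inv_into V \<phi>"
  have \<psi>: "bij_betw \<psi> W V" unfolding \<psi>_def by (rule bij_betw_inv_into[OF \<phi>])
  have \<psi>\<phi>: "\<psi> (\<phi> x) = x" if "x \<in> V" for x
    using \<phi> that unfolding \<psi>_def by (simp add: bij_betw_inv_into_left)
  have \<phi>\<psi>: "\<phi> (\<psi> y) = y" if "y \<in> W" for y
    using \<phi> that unfolding \<psi>_def by (simp add: bij_betw_inv_into_right)
  have \<phi>V: "\<phi> x \<in> W" if "x \<in> V" for x using \<phi> that bij_betwE by blast
  have \<psi>W: "\<psi> y \<in> V" if "y \<in> W" for y using \<psi> that bij_betwE by blast
  show ?thesis unfolding ME_homogeneous_def
  proof (intro allI impI, elim conjE)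
    fix A B f
    assume A: "finite A" "A \<subseteq> V" and B: "finite B" "B \<subseteq> V" and m: "monomorphism E A B f"
    have fAB: "f ` A \<subseteq> B" and finj: "inj_on f A" and fE: "\<And>x y. x \<in> A \<Longrightarrow> y \<in> A \<Longrightarrow> E x y \<Longrightarrow> E (f x) (f y)"
      using m unfolding monomorphism_def by auto
    define f' where "f' = \<phi> \<circ> f \<circ> \<psi>"
    have m': "monomorphism F (\<phi> ` A) (\<phi> ` B) f'"
      unfolding monomorphism_def
    proof (intro conjI ballI impI)
      show "f' ` \<phi> ` A \<subseteq> \<phi> ` B" using fAB A \<psi>\<phi> unfolding f'_def by (auto simp: subset_iff)
      show "inj_on f' (\<phi> ` A)"
      proof (rule inj_onI)
        fix x y assume "x \<in> \<phi> ` A" "y \<in> \<phi> ` A" "f' x = f' y"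
        then obtain a b where ab: "a \<in> A" "b \<in> A" "x = \<phi> a" "y = \<phi> b" "\<phi> (f a) = \<phi> (f b)"
          using A \<psi>\<phi> unfolding f'_def by (auto simp: subset_iff)
        have "f a \<in> V" "f b \<in> V" using ab fAB B by auto
        hence "f a = f b" using ab(5) \<psi>\<phi> by metis
        thus "x = y" using ab finj by (simp add: inj_on_eq_iff)
      qed
      fix x y assume "x \<in> \<phi> ` A" "y \<in> \<phi> ` A" "F x y"
      then obtain a b where ab: "a \<in> A" "b \<in> A" "x = \<phi> a" "y = \<phi> b" "F (\<phi> a) (\<phi> b)" by auto
      hence "E a b" using \<phi>E A by auto
      hence "E (f a) (f b)" using fE ab by auto
      moreover have "f a \<in> V" "f b \<in> V" using ab fAB B by auto
      moreover have "a \<in> V" "b \<in> V" using ab A by auto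
      ultimately have "F (\<phi> (f a)) (\<phi> (f b))" using \<phi>E by blast
      thus "F (f' x) (f' y)" using ab \<psi>\<phi> \<open>a \<in> V\<close> \<open>b \<in> V\<close> unfolding f'_def by simp
    qed
    have fin: "finite (\<phi> ` A)" "\<phi> ` A \<subseteq> W" "finite (\<phi> ` B)" "\<phi> ` B \<subseteq> W" using A B \<phi>V by auto
    have "\<exists>h'. endomorphism W F h' \<and> h' ` W = W \<and> (\<forall>x\<in>\<phi> ` A. h' x = f' x)"
      by (rule ME[unfolded ME_homogeneous_def, rule_format]) (use m' fin in auto)
    then obtain h' where h': "endomorphism W F h'" "h' ` W = W" "\<forall>x\<in>\<phi> ` A. h' x = f' x"
      by blast
    define h where "h = \<psi> \<circ> h' \<circ> \<phi>"
    have h'W: "h' y \<in> W" if "y \<in> W" for y using h'(1) that unfolding endomorphism_def by auto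
    have "endomorphism V E h" unfolding endomorphism_def
    proof (intro conjI ballI impI)
      show "h ` V \<subseteq> V" using h'W \<phi>V \<psi>W unfolding h_def by auto
      fix x y assume xy: "x \<in> V" "y \<in> V" "E x y"
      hence "F (h' (\<phi> x)) (h' (\<phi> y))" using h'(1) \<phi>E \<phi>V unfolding endomorphism_def by auto
      thus "E (h x) (h y)" using \<phi>E xy h'W \<phi>V \<psi>W \<phi>\<psi> unfolding h_def by auto
    qed
    moreover have "h ` V = V"
    proof -
      have "h ` V = \<psi> ` (h' ` (\<phi> ` V))" unfolding h_def by (simp add: image_comp)
      also have "\<phi> ` V = W" using \<phi> by (simp add: bij_betw_def)
      also have "\<psi> ` (h' ` W) = V" using h'(2) \<psi> by (simp add: bij_betw_def)
      finally show ?thesis .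
    qed
    moreover have "\<forall>x\<in>A. h x = f x"
    proof
      fix x assume x: "x \<in> A"
      hence "h' (\<phi> x) = \<phi> (f x)" using h'(3) A \<psi>\<phi> unfolding f'_def by auto
      moreover have "f x \<in> V" using x fAB B by auto
      ultimately show "h x = f x" using \<psi>\<phi> unfolding h_def by simp
    qed
    ultimately show "\<exists>h. endomorphism V E h \<and> h ` V = V \<and> (\<forall>x\<in>A. h x = f x)" by blast
  qed
qed



context
  fixes V :: "'a set" and E :: "'a \<Rightarrow> 'a \<Rightarrow> bool"
  assumes G: "graph V E"
begin

lemma Esym: "E x y \<Longrightarrow> E y x" and EV: "E x y \<Longrightarrow> x \<in> V \<and> y \<in> V"
  and Eirr: "\<not> E x x"
  using G unfolding graph_def by blast+

lemma rtc_sym: "E\<^sup>*\<^sup>* x y \<Longrightarrow> E\<^sup>*\<^sup>* y x"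
proof (induction rule: rtranclp.induct)
  case (rtrancl_into_rtrancl a b c)
  then show ?case using Esym by (meson converse_rtranclp_into_rtranclp)
qed simp

lemma endo_rtc:
  assumes h: "endomorphism V E h" shows "E\<^sup>*\<^sup>* x y \<Longrightarrow> E\<^sup>*\<^sup>* (h x) (h y)"
proof (induction rule: rtranclp.induct)
  case (rtrancl_into_rtrancl a b c)
  have "E (h b) (h c)" using h rtrancl_into_rtrancl.hyps(2) EV unfolding endomorphism_def by blast
  then show ?case using rtrancl_into_rtrancl.IH by (meson rtranclp.rtrancl_into_rtrancl)
qed simp

lemma clique:
  assumes ME: "ME_homogeneous V E" and nc: "\<not> connected_graph V E"
    and xy: "x \<in> V" "y \<in> V" "x \<noteq> y" "E\<^sup>*\<^sup>* x y"
  shows "E x y"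
proof (rule ccontr)
  assume nE: "\<not> E x y"
  obtain u w where uw: "u \<in> V" "w \<in> V" "\<not> E\<^sup>*\<^sup>* u w" using nc unfolding connected_graph_def by blast
  obtain z where z: "z \<in> V" "\<not> E\<^sup>*\<^sup>* x z"
  proof (cases "E\<^sup>*\<^sup>* x w")
    case True
    hence "\<not> E\<^sup>*\<^sup>* x u" using uw rtc_sym by (meson rtranclp_trans)
    thus ?thesis using that uw by blast
  next
    case False thus ?thesis using that uw by blast
  qed
  have xz: "x \<noteq> z" using z by auto
  define f where "f v = (if v = x then x else z)" for v
  have "monomorphism E {x, y} {x, z} f"
    unfolding monomorphism_def f_def using xz xy nE Esym Eirr by (auto simp: inj_on_def)
  hence "\<exists>h. endomorphism V E h \<and> h ` V = V \<and> (\<forall>v\<in>{x,y}. h v = f v)"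
    using xy z by (intro ME[unfolded ME_homogeneous_def, rule_format, of "{x,y}" "{x,z}" f]) auto
  then obtain h where h: "endomorphism V E h" "\<forall>v\<in>{x,y}. h v = f v" by blast
  have "E\<^sup>*\<^sup>* (h x) (h y)" using endo_rtc[OF h(1) xy(4)] .
  moreover have "h x = x" using h(2) unfolding f_def by simp
  moreover have "h y = z" using h(2) xy(3) unfolding f_def by simp
  ultimately show False using z(2) by metis
qed

definition cls :: "'a \<Rightarrow> 'a set" where "cls x = {y\<in>V. x = y \<or> E x y}"

lemma cls_mem: "x \<in> V \<Longrightarrow> x \<in> cls x" unfolding cls_def by auto
lemma cls_sub: "cls x \<subseteq> V" unfolding cls_def by auto

context
  assumes ME: "ME_homogeneous V E" and nc: "\<not> connected_graph V E"
begin

lemma cls_eq: assumes "x \<in> V" "y \<in> cls x" shows "cls y = cls x"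
proof -
  have y: "y \<in> V" "x = y \<or> E x y" using assms unfolding cls_def by auto
  have "z \<in> cls y \<longleftrightarrow> z \<in> cls x" for z
  proof
    assume "z \<in> cls y"
    hence z: "z \<in> V" "y = z \<or> E y z" unfolding cls_def by auto
    hence "E\<^sup>*\<^sup>* x z" using y by (meson r_into_rtranclp rtranclp_trans rtranclp.rtrancl_refl)
    hence "x = z \<or> E x z" using clique[OF ME nc assms(1) z(1)] by blast
    thus "z \<in> cls x" using z unfolding cls_def by auto
  next
    assume "z \<in> cls x"
    hence z: "z \<in> V" "x = z \<or> E x z" unfolding cls_def by auto
    hence "E\<^sup>*\<^sup>* y z" using y Esym by (meson r_into_rtranclp rtranclp_trans rtranclp.rtrancl_refl)
    hence "y = z \<or> E y z" using clique[OF ME nc y(1) z(1)] by blast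
    thus "z \<in> cls y" using z unfolding cls_def by auto
  qed
  thus ?thesis by blast
qed

lemma E_iff: assumes "x \<in> V" "y \<in> V" shows "E x y \<longleftrightarrow> x \<noteq> y \<and> cls x = cls y"
proof
  assume "E x y"
  hence "x \<noteq> y" using Eirr by auto
  moreover have "y \<in> cls x" using \<open>E x y\<close> assms unfolding cls_def by simp
  hence "cls y = cls x" using cls_eq[OF assms(1)] by simp
  ultimately show "x \<noteq> y \<and> cls x = cls y" by simp
next
  assume "x \<noteq> y \<and> cls x = cls y"
  thus "E x y" using cls_mem[OF assms(2)] unfolding cls_def by auto
qed

lemma endo_cls:
  assumes h: "endomorphism V E h" and x: "x \<in> V" and y: "y \<in> cls x"
  shows "h y \<in> cls (h x)"
proof -
  have hx: "h x \<in> V" using h x unfolding endomorphism_def by auto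
  have yV: "y \<in> V" using y cls_sub by auto
  show ?thesis
  proof (cases "x = y")
    case True thus ?thesis using cls_mem[OF hx] by simp
  next
    case False
    hence "E x y" using y unfolding cls_def by auto
    hence "E (h x) (h y)" using h x yV unfolding endomorphism_def by auto
    thus ?thesis using EV unfolding cls_def by auto
  qed
qed

lemma endo_inj:
  assumes h: "endomorphism V E h" and x: "x \<in> V"
  shows "inj_on h (cls x)"
proof (rule inj_onI)
  fix y z assume yz: "y \<in> cls x" "z \<in> cls x" "h y = h z"
  show "y = z"
  proof (rule ccontr)
    assume "y \<noteq> z"
    moreover have "y \<in> V" "z \<in> V" using yz cls_sub by auto
    moreover have "cls y = cls z" using cls_eq[OF x] yz by auto
    ultimately have "E y z" using E_iff by auto
    hence "E (h y) (h z)" using h \<open>y \<in> V\<close> \<open>z \<in> V\<close> unfolding endomorphism_def by auto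
    thus False using yz(3) Eirr by simp
  qed
qed

lemma lemX:
  assumes x: "x \<in> V" and d: "d \<in> V"
  shows "\<exists>h. inj_on h (cls d) \<and> h ` cls d \<subseteq> cls x"
proof -
  have "monomorphism E {d} {x} (\<lambda>_. x)" unfolding monomorphism_def using Eirr by auto
  hence "\<exists>h. endomorphism V E h \<and> h ` V = V \<and> (\<forall>v\<in>{d}. h v = x)"
    using x d by (intro ME[unfolded ME_homogeneous_def, rule_format, of "{d}" "{x}" "\<lambda>_. x"]) auto
  then obtain h where h: "endomorphism V E h" "h d = x" by blast
  have "h ` cls d \<subseteq> cls x" using endo_cls[OF h(1) d] h(2) by auto
  thus ?thesis using endo_inj[OF h(1) d] by blast
qed

lemma same_card:
  assumes x: "x \<in> V" and d: "d \<in> V" and fin: "finite (cls x)"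
  shows "finite (cls d) \<and> card (cls d) = card (cls x)"
proof -
  obtain h where h: "inj_on h (cls d)" "h ` cls d \<subseteq> cls x" using lemX[OF x d] by blast
  have fd: "finite (cls d)" using h fin by (meson finite_imageD finite_subset)
  obtain h' where h': "inj_on h' (cls x)" "h' ` cls x \<subseteq> cls d" using lemX[OF d x] by blast
  have "card (cls d) \<le> card (cls x)" using card_inj_on_le[OF h fin] .
  moreover have "card (cls x) \<le> card (cls d)" using card_inj_on_le[OF h' fd] .
  ultimately show ?thesis using fd by simp
qed

lemma infinite_classes:
  assumes inf: "infinite V"
  shows "infinite (cls ` V)"
proof
  assume finQ: "finite (cls ` V)"
  have VU: "V = \<Union> (cls ` V)" using cls_mem cls_sub by blast
  have "\<exists>c\<in>V. infinite (cls c)"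
  proof (rule ccontr)
    assume "\<not> (\<exists>c\<in>V. infinite (cls c))"
    hence "finite (\<Union> (cls ` V))" using finQ by (auto intro!: finite_Union)
    thus False using VU inf by simp
  qed
  then obtain c where c: "c \<in> V" "infinite (cls c)" by blast
  obtain u w where uw: "u \<in> V" "w \<in> V" "\<not> E\<^sup>*\<^sup>* u w" using nc unfolding connected_graph_def by blast
  have "cls u \<noteq> cls w"
  proof
    assume "cls u = cls w"
    hence "u = w \<or> E u w" using cls_mem[OF uw(2)] unfolding cls_def by auto
    thus False using uw(3) by auto
  qed
  have "\<exists>d\<in>V. cls d \<noteq> cls c"
  proof (cases "cls u = cls c")
    case True thus ?thesis using uw \<open>cls u \<noteq> cls w\<close> by auto
  next
    case False thus ?thesis using uw by auto
  qed
  then obtain d where d: "d \<in> V" "cls d \<noteq> cls c" by blast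
  have "infinite (cls c - {c})" using c(2) by (rule infinite_remove)
  hence "cls c - {c} \<noteq> {}" by (metis finite.emptyI)
  then obtain c' where c': "c' \<in> cls c" "c' \<noteq> c" by blast
  have c'V: "c' \<in> V" using c' cls_sub by auto
  have cd: "c \<noteq> d" using d by auto
  have nE: "\<not> E c d" "\<not> E d c" using E_iff c d by auto
  define f where "f v = (if v = d then c' else c)" for v
  have "monomorphism E {c, d} {c, c'} f"
    unfolding monomorphism_def f_def using cd c' nE Eirr by (auto simp: inj_on_def)
  moreover have "finite {c,d}" "{c,d} \<subseteq> V" "finite {c, c'}" "{c, c'} \<subseteq> V" using c d c'V by auto
  ultimately have "\<exists>h. endomorphism V E h \<and> h ` V = V \<and> (\<forall>v\<in>{c,d}. h v = f v)"
    by (intro ME[unfolded ME_homogeneous_def, rule_format, of "{c,d}" "{c,c'}" f]) auto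
  then obtain h where h: "endomorphism V E h" "h ` V = V" "\<forall>v\<in>{c,d}. h v = f v"
    by blast
  have hc: "h c = c" "h d = c'" using h(3) cd unfolding f_def by auto
  define \<mu> where "\<mu> K = cls (h (SOME k. k \<in> K))" for K
  have hV: "h v \<in> V" if "v \<in> V" for v using h(1) that unfolding endomorphism_def by auto
  have \<mu>: "\<mu> (cls v) = cls (h v)" if v: "v \<in> V" for v
  proof -
    have "(SOME k. k \<in> cls v) \<in> cls v" using cls_mem[OF v] by (rule someI)
    hence "h (SOME k. k \<in> cls v) \<in> cls (h v)" using endo_cls[OF h(1) v] by blast
    thus ?thesis unfolding \<mu>_def using cls_eq[OF hV[OF v]] by blast
  qed
  have "\<mu> ` (cls ` V) = cls ` V"
  proof
    show "\<mu> ` cls ` V \<subseteq> cls ` V"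
    proof
      fix K assume "K \<in> \<mu> ` cls ` V"
      then obtain v where v: "v \<in> V" "K = \<mu> (cls v)" by blast
      hence "K = cls (h v)" using \<mu> by simp
      thus "K \<in> cls ` V" using hV[OF v(1)] by blast
    qed
    show "cls ` V \<subseteq> \<mu> ` cls ` V"
    proof
      fix K assume "K \<in> cls ` V"
      then obtain y where y: "y \<in> V" "K = cls y" by blast
      then obtain v where "v \<in> V" "y = h v" using h(2) by blast
      hence "K = \<mu> (cls v)" using y \<mu> by simp
      thus "K \<in> \<mu> ` cls ` V" using \<open>v \<in> V\<close> by blast
    qed
  qed
  hence "inj_on \<mu> (cls ` V)" using finQ by (simp add: eq_card_imp_inj_on)
  moreover have "\<mu> (cls c) = \<mu> (cls d)"
    using \<mu>[OF c(1)] \<mu>[OF d(1)] hc cls_eq[OF c(1) c'(1)] by simp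
  ultimately have "cls c = cls d" using c(1) d(1) by (auto dest: inj_onD)
  thus False using d(2) by simp
qed

end
end



lemma build_iso:
  fixes V :: "'a set" and S :: "nat set" and C :: "'a \<Rightarrow> 'a set"
  assumes Eiff: "\<And>x y. x \<in> V \<Longrightarrow> y \<in> V \<Longrightarrow> E x y \<longleftrightarrow> x \<noteq> y \<and> C x = C y"
    and Csub: "\<And>x. C x \<subseteq> V" and Cmem: "\<And>x. x \<in> V \<Longrightarrow> x \<in> C x"
    and Ceq: "\<And>x y. x \<in> V \<Longrightarrow> y \<in> C x \<Longrightarrow> C y = C x"
    and g: "bij_betw g (UNIV::nat set) (C ` V)"
    and e: "\<And>q. q \<in> C ` V \<Longrightarrow> bij_betw (e q) S q"
  shows "graph_iso V E ((UNIV::nat set) \<times> S) (lex_E (UNIV::nat set) edgeless_E S (complete_E S))"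
proof -
  define \<Phi> where "\<Phi> p = e (g (fst p)) (snd p)" for p
  have gQ: "g i \<in> C ` V" for i using g bij_betwE by blast
  have PhiC: "\<Phi> p \<in> V \<and> C (\<Phi> p) = g (fst p)" if p: "snd p \<in> S" for p
  proof -
    obtain v where v: "v \<in> V" "g (fst p) = C v" using gQ[of "fst p"] by blast
    have "\<Phi> p \<in> g (fst p)" unfolding \<Phi>_def using e[OF gQ] p bij_betwE by blast
    hence "\<Phi> p \<in> C v" using v by simp
    thus ?thesis using Ceq[OF v(1)] Csub v by blast
  qed
  have ginj: "g i = g j \<longleftrightarrow> i = j" for i j using g unfolding bij_betw_def by (auto dest: inj_onD)
  have Phi_eq: "\<Phi> p = \<Phi> p' \<longleftrightarrow> p = p'" if "p \<in> UNIV \<times> S" "p' \<in> UNIV \<times> S" for p p'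
  proof
    assume eq: "\<Phi> p = \<Phi> p'"
    hence "g (fst p) = g (fst p')" using PhiC that by (metis mem_Times_iff)
    hence f: "fst p = fst p'" using ginj by simp
    hence "e (g (fst p)) (snd p) = e (g (fst p)) (snd p')" using eq unfolding \<Phi>_def by simp
    hence "snd p = snd p'" using e[OF gQ, of "fst p"] that unfolding bij_betw_def by (auto dest: inj_onD)
    thus "p = p'" using f by (simp add: prod_eq_iff)
  qed simp
  have bij: "bij_betw \<Phi> (UNIV \<times> S) V"
    unfolding bij_betw_def
  proof
    show "inj_on \<Phi> (UNIV \<times> S)" using Phi_eq by (auto intro: inj_onI)
    show "\<Phi> ` (UNIV \<times> S) = V"
    proof
      show "\<Phi> ` (UNIV \<times> S) \<subseteq> V" using PhiC by auto
      show "V \<subseteq> \<Phi> ` (UNIV \<times> S)"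
      proof
        fix v assume v: "v \<in> V"
        then obtain i where i: "g i = C v" using g unfolding bij_betw_def by (metis imageE image_eqI rangeE)
        have "v \<in> e (g i) ` S" using e[OF gQ, of i] Cmem[OF v] i unfolding bij_betw_def by simp
        then obtain j where "j \<in> S" "v = e (g i) j" by blast
        hence "v = \<Phi> (i, j)" "(i, j) \<in> UNIV \<times> S" unfolding \<Phi>_def by auto
        thus "v \<in> \<Phi> ` (UNIV \<times> S)" by blast
      qed
    qed
  qed
  have PhiE: "E (\<Phi> p) (\<Phi> p') \<longleftrightarrow> lex_E (UNIV::nat set) edgeless_E S (complete_E S) p p'"
    if "p \<in> UNIV \<times> S" "p' \<in> UNIV \<times> S" for p p'
  proof -
    have "E (\<Phi> p) (\<Phi> p') \<longleftrightarrow> \<Phi> p \<noteq> \<Phi> p' \<and> g (fst p) = g (fst p')"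
      using Eiff PhiC that by (metis mem_Times_iff)
    also have "\<dots> \<longleftrightarrow> p \<noteq> p' \<and> fst p = fst p'" using Phi_eq[OF that] ginj by simp
    also have "\<dots> \<longleftrightarrow> fst p = fst p' \<and> snd p \<noteq> snd p'" by (auto simp: prod_eq_iff)
    finally show ?thesis using that by (simp add: lexF_iff)
  qed
  define \<psi> where "\<psi> = inv_into (UNIV \<times> S) \<Phi>"
  have \<psi>: "bij_betw \<psi> V (UNIV \<times> S)" unfolding \<psi>_def by (rule bij_betw_inv_into[OF bij])
  have "E x y \<longleftrightarrow> lex_E (UNIV::nat set) edgeless_E S (complete_E S) (\<psi> x) (\<psi> y)"
    if "x \<in> V" "y \<in> V" for x y
  proof -
    have "\<Phi> (\<psi> x) = x" "\<Phi> (\<psi> y) = y" using that bij unfolding \<psi>_def by (simp_all add: bij_betw_inv_into_right)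
    moreover have "\<psi> x \<in> UNIV \<times> S" "\<psi> y \<in> UNIV \<times> S" using \<psi> that bij_betwE by blast+
    ultimately show ?thesis using PhiE by metis
  qed
  thus ?thesis unfolding graph_iso_def using \<psi> by blast
qed


theorem proposition8p4:
  fixes V :: "'a set" and E :: "'a \<Rightarrow> 'a \<Rightarrow> bool"
  assumes "graph V E"
    and "countable V" and "infinite V"
    and "\<not> connected_graph V E"
  shows "ME_homogeneous V E \<longleftrightarrow>
           (graph_iso V E I_omega_K_omega_V I_omega_K_omega_E \<or>
            (\<exists>n::nat. n \<ge> 1 \<and> graph_iso V E (I_omega_K_V n) (I_omega_K_E n)))"
proof
  assume ME: "ME_homogeneous V E"
  note G = assms(1) and nc = assms(4)
  let ?C = "cls V E"
  have Eiff: "\<And>x y. x \<in> V \<Longrightarrow> y \<in> V \<Longrightarrow> E x y \<longleftrightarrow> x \<noteq> y \<and> ?C x = ?C y"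
    using E_iff[OF G ME nc] by blast
  have Csub: "\<And>x. ?C x \<subseteq> V" using cls_sub[OF G] by blast
  have Cmem: "\<And>x. x \<in> V \<Longrightarrow> x \<in> ?C x" using cls_mem[OF G] by blast
  have Ceq: "\<And>x y. x \<in> V \<Longrightarrow> y \<in> ?C x \<Longrightarrow> ?C y = ?C x" using cls_eq[OF G ME nc] by blast
  have Qinf: "infinite (?C ` V)" using infinite_classes[OF G ME nc assms(3)] .
  have Qc: "countable (?C ` V)" using assms(2) by simp
  have g: "bij_betw (from_nat_into (?C ` V)) (UNIV::nat set) (?C ` V)"
    using bij_betw_from_nat_into[OF Qc Qinf] .
  show "graph_iso V E I_omega_K_omega_V I_omega_K_omega_E \<or>
            (\<exists>n::nat. n \<ge> 1 \<and> graph_iso V E (I_omega_K_V n) (I_omega_K_E n))"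
  proof (cases "\<exists>x\<in>V. finite (?C x)")
    case True
    then obtain x where x: "x \<in> V" "finite (?C x)" by blast
    define n where "n = card (?C x)"
    have n1: "n \<ge> 1" unfolding n_def using x Cmem[OF x(1)]
      by (metis One_nat_def Suc_leI card_gt_0_iff empty_iff)
    have "\<forall>q\<in>?C ` V. \<exists>b. bij_betw b {..<n} q"
    proof
      fix q assume "q \<in> ?C ` V"
      then obtain d where d: "d \<in> V" "q = ?C d" by blast
      have "finite q \<and> card q = n" using same_card[OF G ME nc x(1) d(1) x(2)] d n_def by simp
      thus "\<exists>b. bij_betw b {..<n} q" using ex_bij_betw_nat_finite[of q] by (metis atLeast0LessThan)
    qed
    then obtain e where e: "\<And>q. q \<in> ?C ` V \<Longrightarrow> bij_betw (e q) {..<n} q" using bchoice by metis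
    have "graph_iso V E (I_omega_K_V n) (I_omega_K_E n)"
      by (rule build_iso[OF Eiff Csub Cmem Ceq g e])
    thus ?thesis using n1 by blast
  next
    case False
    have e: "bij_betw (from_nat_into q) (UNIV::nat set) q" if qQ: "q \<in> ?C ` V" for q
    proof -
      obtain d where d: "d \<in> V" "q = ?C d" using qQ by blast
      have "countable q" using d Csub assms(2) countable_subset by metis
      moreover have "infinite q" using d False by blast
      ultimately show ?thesis by (rule bij_betw_from_nat_into)
    qed
    have "graph_iso V E I_omega_K_omega_V I_omega_K_omega_E"
      by (rule build_iso[OF Eiff Csub Cmem Ceq g e])
    thus ?thesis by blast
  qed
next
  assume "graph_iso V E I_omega_K_omega_V I_omega_K_omega_E \<or>
            (\<exists>n::nat. n \<ge> 1 \<and> graph_iso V E (I_omega_K_V n) (I_omega_K_E n))"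
  thus "ME_homogeneous V E"
  proof
    assume "graph_iso V E I_omega_K_omega_V I_omega_K_omega_E"
    moreover have "ME_homogeneous I_omega_K_omega_V I_omega_K_omega_E"
      by (rule model_ME) simp
    ultimately show ?thesis by (rule ME_transfer)
  next
    assume "\<exists>n::nat. n \<ge> 1 \<and> graph_iso V E (I_omega_K_V n) (I_omega_K_E n)"
    then obtain n where "graph_iso V E (I_omega_K_V n) (I_omega_K_E n)" by blast
    moreover have "ME_homogeneous (I_omega_K_V n) (I_omega_K_E n)"
      by (rule model_ME) simp
    ultimately show ?thesis by (rule ME_transfer)
  qed
qed

end
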